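(* Let $m\in\mathbb{N}$, let $H$ be a finite field and let $\mathbb{F}$ be an extension field of $H$ of degree $[\mathbb{F}:H]=m$. Let $h_1,\dots,h_m\in H^m$ and $t_1,\dots,t_m\in\mathbb{F}$ be chosen independently and uniformly at random. Then for every set $A\subseteq\mathbb{F}^m$ with $|A|=\alpha\,|\mathbb{F}|^m$, \[ \Pr\Big[\sum_{i=1}^m t_i\, h_i\in A\Big]\le \alpha+\frac{2}{|H|}. \]
   Context: Here $H^m\subseteq\mathbb{F}^m$ via the inclusion $H\subseteq\mathbb{F}$, and $t_i h_i$ denotes scalar multiplication of the vector $h_i$ by $t_i\in\mathbb{F}$. *)

theory Defs
  imports "HOL-Algebra.Embedded_Algebras" "HOL-Library.FuncSet"
begin

definition lin_comb :: "('a, 'b) ring_scheme \<Rightarrow> nat \<Rightarrow> (nat \<Rightarrow> 'a) \<Rightarrow> (nat \<Rightarrow> nat \<Rightarrow> 'a) \<Rightarrow> (nat \<Rightarrow> 'a)"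
  where "lin_comb R m t h = (\<lambda>j\<in>{..<m}. finsum R (\<lambda>i. t i \<otimes>\<^bsub>R\<^esub> h i j) {..<m})"

end

theory Submission
  imports Defs
begin

definition spanV :: "('a,'b) ring_scheme \<Rightarrow> 'a set \<Rightarrow> nat \<Rightarrow> (nat \<Rightarrow> nat \<Rightarrow> 'a) \<Rightarrow> nat \<Rightarrow> (nat \<Rightarrow> 'a) set" where
  "spanV R H m h k = (\<lambda>c. \<lambda>j\<in>{..<m}. finsum R (\<lambda>i. c i \<otimes>\<^bsub>R\<^esub> h i j) {..<k}) ` ({..<k} \<rightarrow>\<^sub>E H)"

context field begin

lemma finsum_in_sub:
  assumes "subring H R" "finite A" "f \<in> A \<rightarrow> H"
  shows "finsum R f A \<in> H"
  using assms(2,3)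
proof (induction A rule: finite_induct)
  case empty then show ?case using subringE[OF assms(1)] by simp
next
  case (insert a A)
  have sub: "H \<subseteq> carrier R" using subringE[OF assms(1)] by simp
  have "finsum R f (insert a A) = f a \<oplus> finsum R f A"
    using insert sub by (intro finsum_insert) auto
  then show ?case using insert subringE(7)[OF assms(1)] by auto
qed

lemma finsum_swap:
  assumes "finite A" "finite B" "\<And>i j. i \<in> A \<Longrightarrow> j \<in> B \<Longrightarrow> f i j \<in> carrier R"
  shows "(\<Oplus>i\<in>A. \<Oplus>j\<in>B. f i j) = (\<Oplus>j\<in>B. \<Oplus>i\<in>A. f i j)"
  using assms(1,3)
proof (induction A rule: finite_induct)
  case empty then show ?case by (simp add: finsum_zero)
next
  case (insert a A)
  have "(\<Oplus>i\<in>insert a A. \<Oplus>j\<in>B. f i j) = (\<Oplus>j\<in>B. f a j) \<oplus> (\<Oplus>i\<in>A. \<Oplus>j\<in>B. f i j)"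
    using insert by (intro finsum_insert) auto
  also have "\<dots> = (\<Oplus>j\<in>B. f a j) \<oplus> (\<Oplus>j\<in>B. \<Oplus>i\<in>A. f i j)" using insert by simp
  also have "\<dots> = (\<Oplus>j\<in>B. f a j \<oplus> (\<Oplus>i\<in>A. f i j))"
    using insert by (intro finsum_addf[symmetric]) auto
  also have "\<dots> = (\<Oplus>j\<in>B. \<Oplus>i\<in>insert a A. f i j)"
    using insert by (intro finsum_cong') (auto simp: finsum_insert)
  finally show ?case .
qed

lemma finsum_diff:
  assumes "finite A" "f \<in> A \<rightarrow> carrier R" "g \<in> A \<rightarrow> carrier R"
  shows "(\<Oplus>i\<in>A. f i \<ominus> g i) = finsum R f A \<ominus> finsum R g A"
  using assms
proof (induction A rule: finite_induct)
  case empty then show ?case by (simp add: minus_eq)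
next
  case (insert a A)
  have fa: "f a \<in> carrier R" "g a \<in> carrier R" using insert by auto
  have c: "finsum R f A \<in> carrier R" "finsum R g A \<in> carrier R" using insert by auto
  have "(\<Oplus>i\<in>insert a A. f i \<ominus> g i) = (f a \<ominus> g a) \<oplus> (\<Oplus>i\<in>A. f i \<ominus> g i)"
    using insert by (intro finsum_insert) (auto simp: minus_eq)
  also have "\<dots> = (f a \<ominus> g a) \<oplus> (finsum R f A \<ominus> finsum R g A)" using insert by simp
  also have "\<dots> = (f a \<oplus> finsum R f A) \<ominus> (g a \<oplus> finsum R g A)"
    using fa c by algebra
  also have "\<dots> = finsum R f (insert a A) \<ominus> finsum R g (insert a A)"
    using insert by (simp add: finsum_insert)
  finally show ?case .
qed


lemma combine_finsum:
  "length Ks = n \<Longrightarrow> length Us = n \<Longrightarrow> set Ks \<subseteq> carrier R \<Longrightarrow> set Us \<subseteq> carrier R \<Longrightarrow>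
   combine Ks Us = (\<Oplus>j\<in>{..<n}. Ks!j \<otimes> Us!j)"
proof (induction Ks arbitrary: Us n)
  case Nil then show ?case by simp
next
  case (Cons k Ks)
  then obtain u Us' where U: "Us = u # Us'" by (cases Us) auto
  obtain n' where n: "n = Suc n'" using Cons by auto
  have IH: "combine Ks Us' = (\<Oplus>j\<in>{..<n'}. Ks!j \<otimes> Us'!j)"
    using Cons U n by auto
  have ne: "\<And>j. j < length Ks \<Longrightarrow> Ks!j \<in> carrier R" "\<And>j. j < length Us' \<Longrightarrow> Us'!j \<in> carrier R"
    using Cons(4,5) U nth_mem by auto
  have cs: "(\<lambda>j. (k#Ks)!j \<otimes> Us!j) \<in> {..<Suc n'} \<rightarrow> carrier R"
  proof
    fix j assume "j \<in> {..<Suc n'}"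
    then show "(k#Ks)!j \<otimes> Us!j \<in> carrier R"
    proof (cases j)
      case 0 then show ?thesis using Cons(4,5) U by simp
    next
      case (Suc j') then show ?thesis using ne \<open>j \<in> {..<Suc n'}\<close> Cons(2,3) U n by simp
    qed
  qed
  have "(\<Oplus>j\<in>{..<n}. (k#Ks)!j \<otimes> Us!j) = (\<Oplus>j\<in>insert 0 (Suc ` {..<n'}). (k#Ks)!j \<otimes> Us!j)"
    unfolding n lessThan_Suc_eq_insert_0 ..
  also have "\<dots> = k \<otimes> u \<oplus> (\<Oplus>j\<in>Suc ` {..<n'}. (k#Ks)!j \<otimes> Us!j)"
    using cs by (subst finsum_insert) (auto simp: U lessThan_Suc_eq_insert_0)
  also have "(\<Oplus>j\<in>Suc ` {..<n'}. (k#Ks)!j \<otimes> Us!j) = (\<Oplus>j\<in>{..<n'}. Ks!j \<otimes> Us'!j)"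
    using cs ne Cons(2,3) U n by (subst finsum_reindex) (auto simp: lessThan_Suc_eq_insert_0)
  finally show ?case using IH U by simp
qed

lemma basis_exists:
  assumes H: "subfield H R" and d: "dimension m H (carrier R)"
  shows "\<exists>b. b \<in> {..<m} \<rightarrow> carrier R \<and> (\<forall>s\<in>carrier R. \<exists>c\<in>{..<m}\<rightarrow>H. s = (\<Oplus>j\<in>{..<m}. c j \<otimes> b j))
      \<and> (\<forall>c\<in>{..<m}\<rightarrow>H. (\<Oplus>j\<in>{..<m}. c j \<otimes> b j) = \<zero> \<longrightarrow> (\<forall>j<m. c j = \<zero>))"
proof -
  obtain Vs where V: "set Vs \<subseteq> carrier R" "independent H Vs" "length Vs = m" "Span H Vs = carrier R"
    using exists_base[OF H d] by blast
  have Hc: "H \<subseteq> carrier R" using subfieldE(3)[OF H] .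
  show ?thesis
  proof (intro exI[of _ "\<lambda>j. Vs!j"] conjI ballI impI allI)
    show "(\<lambda>j. Vs!j) \<in> {..<m} \<rightarrow> carrier R" using V(1,3) by auto
  next
    fix s assume s: "s \<in> carrier R"
    then obtain Ks where K: "set Ks \<subseteq> H" "length Ks = length Vs" "s = combine Ks Vs"
      using Span_mem_iff_length_version[OF H V(1)] V(4) by blast
    show "\<exists>c\<in>{..<m}\<rightarrow>H. s = (\<Oplus>j\<in>{..<m}. c j \<otimes> Vs!j)"
    proof (rule bexI[of _ "\<lambda>j. Ks!j"])
      have "set Ks \<subseteq> carrier R" using K(1) Hc by blast
      then show "s = (\<Oplus>j\<in>{..<m}. Ks!j \<otimes> Vs!j)"
        using K(2,3) V(1,3) combine_finsum[of Ks m Vs] by simp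
      show "(\<lambda>j. Ks!j) \<in> {..<m} \<rightarrow> H" 
      proof (rule Pi_I)
        fix j assume "j \<in> {..<m}"
        hence "j < length Ks" using K(2) V(3) by simp
        hence "Ks!j \<in> set Ks" by (rule nth_mem)
        thus "Ks!j \<in> H" using K(1) by blast
      qed
    qed
  next
    fix c j assume c: "c \<in> {..<m}\<rightarrow>H" and z: "(\<Oplus>j\<in>{..<m}. c j \<otimes> Vs!j) = \<zero>" and j: "j < m"
    define Ks where "Ks = map c [0..<m]"
    have Ks: "set Ks \<subseteq> H" "length Ks = m" using c by (auto simp: Ks_def)
    have "combine Ks Vs = (\<Oplus>j\<in>{..<m}. Ks!j \<otimes> Vs!j)"
    proof (rule combine_finsum)
      show "set Ks \<subseteq> carrier R" using Ks(1) Hc by blast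
    qed (use Ks(2) V(1,3) in auto)
    also have "\<dots> = (\<Oplus>j\<in>{..<m}. c j \<otimes> Vs!j)"
      proof (intro finsum_cong')
      have "\<And>x. x < m \<Longrightarrow> c x \<in> carrier R" "\<And>x. x < m \<Longrightarrow> Vs!x \<in> carrier R"
        subgoal using c Hc by auto
        subgoal using V(1,3) by auto
        done
      then show "(\<lambda>j. c j \<otimes> Vs ! j) \<in> {..<m} \<rightarrow> carrier R" by simp
    qed (auto simp: Ks_def)
    finally have "combine Ks Vs = \<zero>" using z by simp
    hence "set (take (length Vs) Ks) \<subseteq> {\<zero>}"
      using independent_imp_trivial_combine[OF H V(2) Ks(1)] by blast
    hence "set Ks \<subseteq> {\<zero>}" using Ks(2) V(3) by simp
    moreover have "Ks!j \<in> set Ks" using j Ks(2) by (intro nth_mem) simp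
    moreover have "Ks!j = c j" using j by (simp add: Ks_def)
    ultimately show "c j = \<zero>" by auto
  qed
qed

lemma solve_lin:
  assumes "a \<in> carrier R" "x \<in> carrier R" "S \<in> carrier R" "ia \<in> carrier R"
    "ia \<otimes> a = \<one>" "a \<otimes> x \<oplus> S = \<zero>"
  shows "x = (\<ominus> ia) \<otimes> S"
proof -
  have "\<ominus> S = a \<otimes> x" using assms by (intro minus_equality) auto
  have "x = (ia \<otimes> a) \<otimes> x" using assms by simp
  also have "\<dots> = ia \<otimes> (a \<otimes> x)" using assms(4,1,2) by (rule m_assoc)
  also have "\<dots> = ia \<otimes> (\<ominus> S)" using \<open>\<ominus> S = a \<otimes> x\<close> by simp
  also have "\<dots> = (\<ominus> ia) \<otimes> S" using assms by (simp add: l_minus r_minus)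
  finally show ?thesis .
qed

lemma hind:
  assumes H: "subfield H R"
    and hM: "h \<in> {..<m} \<rightarrow>\<^sub>E ({..<m} \<rightarrow>\<^sub>E H)"
    and good: "\<forall>k<m. h k \<notin> spanV R H m h k"
  shows "n \<le> m \<Longrightarrow> c \<in> {..<n} \<rightarrow> H \<Longrightarrow> (\<forall>l<m. (\<Oplus>i\<in>{..<n}. c i \<otimes> h i l) = \<zero>) \<Longrightarrow> \<forall>i<n. c i = \<zero>"
proof (induction n arbitrary: c)
  case 0 then show ?case by simp
next
  case (Suc n)
  have Hc: "H \<subseteq> carrier R" using subfieldE(3)[OF H] .
  have hH: "\<And>i l. i < m \<Longrightarrow> l < m \<Longrightarrow> h i l \<in> H" using hM by auto
  have hC: "\<And>i l. i < m \<Longrightarrow> l < m \<Longrightarrow> h i l \<in> carrier R" using hH Hc by blast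
  have cH: "\<And>i. i < Suc n \<Longrightarrow> c i \<in> H" using Suc(3) by auto
  have cC: "\<And>i. i < Suc n \<Longrightarrow> c i \<in> carrier R" using cH Hc by blast
  have nm: "n < m" using Suc(2) by simp
  define S where "S l = (\<Oplus>i\<in>{..<n}. c i \<otimes> h i l)" for l
  have SC: "S l \<in> carrier R" if "l < m" for l
    unfolding S_def using that nm hC cC by (intro finsum_closed) auto
  have split: "c n \<otimes> h n l \<oplus> S l = \<zero>" if l: "l < m" for l
  proof -
    have "(\<Oplus>i\<in>{..<Suc n}. c i \<otimes> h i l) = c n \<otimes> h n l \<oplus> S l"
      unfolding S_def lessThan_Suc using l nm hC cC by (intro finsum_insert) auto
    then show ?thesis using Suc(4) l by simp
  qed
  show ?case
  proof (cases "c n = \<zero>")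
    case True
    have "\<forall>l<m. S l = \<zero>"
    proof (intro allI impI)
      fix l assume l: "l < m"
      have "c n \<otimes> h n l = \<zero>" using True hC[OF nm l] by simp
      hence "c n \<otimes> h n l \<oplus> S l = S l" using SC[OF l] by simp
      then show "S l = \<zero>" using split[OF l] by simp
    qed
    moreover have "c \<in> {..<n} \<rightarrow> H" using cH by simp
    moreover have "n \<le> m" using nm by simp
    ultimately have "\<forall>i<n. c i = \<zero>" using Suc(1)[of c] unfolding S_def by blast
    then show ?thesis using True by (simp add: less_Suc_eq)
  next
    case False
    have cn: "c n \<in> H - {\<zero>}" using cH False by simp
    define ia where "ia = inv (c n)"
    have ia: "ia \<in> H" "ia \<otimes> c n = \<one>" using subfield_m_inv[OF H cn] unfolding ia_def by auto
    have iaC: "ia \<in> carrier R" using ia Hc by blast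
    define d where "d = (\<lambda>i\<in>{..<n}. (\<ominus> ia) \<otimes> c i)"
    have dH: "d \<in> {..<n} \<rightarrow>\<^sub>E H"
    proof -
      have "\<ominus> ia \<in> H" using ia subringE(5)[OF subfieldE(1)[OF H]] by blast
      then have "\<And>i. i < n \<Longrightarrow> (\<ominus> ia) \<otimes> c i \<in> H"
        using cH subringE(6)[OF subfieldE(1)[OF H]] by simp
      then show ?thesis unfolding d_def by auto
    qed
    have hn: "h n l = (\<Oplus>i\<in>{..<n}. d i \<otimes> h i l)" if l: "l < m" for l
    proof -
      have "h n l = (\<ominus> ia) \<otimes> S l"
        using solve_lin[OF cC[of n] hC[OF nm l] SC[OF l] iaC ia(2) split[OF l]] by simp
      also have "\<dots> = (\<Oplus>i\<in>{..<n}. (\<ominus> ia) \<otimes> (c i \<otimes> h i l))"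
        unfolding S_def using iaC cC hC nm l by (intro finsum_rdistr) auto
      also have "\<dots> = (\<Oplus>i\<in>{..<n}. d i \<otimes> h i l)"
        using iaC cC hC nm l by (intro finsum_cong') (auto simp: d_def m_assoc)
      finally show ?thesis .
    qed
    have "h n = (\<lambda>j\<in>{..<m}. \<Oplus>i\<in>{..<n}. d i \<otimes> h i j)"
    proof
      fix j show "h n j = (\<lambda>j\<in>{..<m}. \<Oplus>i\<in>{..<n}. d i \<otimes> h i j) j"
      proof (cases "j < m")
        case True then show ?thesis using hn by simp
      next
        case False then show ?thesis using hM nm by (auto simp: PiE_def extensional_def)
      qed
    qed
    then have "h n \<in> spanV R H m h n" unfolding spanV_def using dH by blast
    then show ?thesis using good nm by blast
  qed
qed

lemma kernel:
  assumes H: "subfield H R"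
    and hM: "h \<in> {..<m} \<rightarrow>\<^sub>E ({..<m} \<rightarrow>\<^sub>E H)"
    and good: "\<forall>k<m. h k \<notin> spanV R H m h k"
    and bC: "b \<in> {..<m} \<rightarrow> carrier R"
    and bspan: "\<forall>s\<in>carrier R. \<exists>c\<in>{..<m}\<rightarrow>H. s = (\<Oplus>j\<in>{..<m}. c j \<otimes> b j)"
    and bind: "\<forall>c\<in>{..<m}\<rightarrow>H. (\<Oplus>j\<in>{..<m}. c j \<otimes> b j) = \<zero> \<longrightarrow> (\<forall>j<m. c j = \<zero>)"
    and sC: "s \<in> {..<m} \<rightarrow> carrier R"
    and z: "\<forall>l<m. (\<Oplus>i\<in>{..<m}. s i \<otimes> h i l) = \<zero>"
  shows "\<forall>i<m. s i = \<zero>"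
proof -
  have Hc: "H \<subseteq> carrier R" using subfieldE(3)[OF H] .
  have Hs: "subring H R" using subfieldE(1)[OF H] .
  have hH: "\<And>i l. i < m \<Longrightarrow> l < m \<Longrightarrow> h i l \<in> H" using hM by auto
  have hC: "\<And>i l. i < m \<Longrightarrow> l < m \<Longrightarrow> h i l \<in> carrier R" using hH Hc by blast
  have bC': "\<And>j. j < m \<Longrightarrow> b j \<in> carrier R" using bC by auto
  have "\<forall>i\<in>{..<m}. \<exists>c. c \<in> {..<m}\<rightarrow>H \<and> s i = (\<Oplus>j\<in>{..<m}. c j \<otimes> b j)"
  proof
    fix i assume "i \<in> {..<m}"
    then have "s i \<in> carrier R" using sC by auto
    then show "\<exists>c. c \<in> {..<m}\<rightarrow>H \<and> s i = (\<Oplus>j\<in>{..<m}. c j \<otimes> b j)" using bspan by blast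
  qed
  then obtain C where C: "\<And>i. i \<in> {..<m} \<Longrightarrow> C i \<in> {..<m}\<rightarrow>H \<and> s i = (\<Oplus>j\<in>{..<m}. C i j \<otimes> b j)"
    by metis
  have CH: "\<And>i j. i < m \<Longrightarrow> j < m \<Longrightarrow> C i j \<in> H" using C by blast
  have CC: "\<And>i j. i < m \<Longrightarrow> j < m \<Longrightarrow> C i j \<in> carrier R" using CH Hc by blast
  have coef0: "(\<Oplus>i\<in>{..<m}. C i j \<otimes> h i l) = \<zero>" if j: "j < m" and l: "l < m" for j l
  proof -
    define e where "e j = (\<Oplus>i\<in>{..<m}. C i j \<otimes> h i l)" for j
    have eH: "e \<in> {..<m} \<rightarrow> H"
    proof
      fix j assume "j \<in> {..<m}"
      then show "e j \<in> H" unfolding e_def using CH hH l subringE(6)[OF Hs]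
        by (intro finsum_in_sub[OF Hs]) auto
    qed
    have eC: "\<And>j. j < m \<Longrightarrow> e j \<in> carrier R" using eH Hc by blast
    have "\<zero> = (\<Oplus>i\<in>{..<m}. s i \<otimes> h i l)" using z l by simp
    also have "\<dots> = (\<Oplus>i\<in>{..<m}. (\<Oplus>j\<in>{..<m}. C i j \<otimes> b j) \<otimes> h i l)"
      using C sC hC l CC bC' by (intro finsum_cong') (auto intro!: m_closed finsum_closed)
    also have "\<dots> = (\<Oplus>i\<in>{..<m}. \<Oplus>j\<in>{..<m}. (C i j \<otimes> b j) \<otimes> h i l)"
      using CC bC' hC l by (intro finsum_cong' finsum_ldistr) auto
    also have "\<dots> = (\<Oplus>j\<in>{..<m}. \<Oplus>i\<in>{..<m}. (C i j \<otimes> b j) \<otimes> h i l)"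
      using CC bC' hC l by (intro finsum_swap) auto
    also have "\<dots> = (\<Oplus>j\<in>{..<m}. \<Oplus>i\<in>{..<m}. (C i j \<otimes> h i l) \<otimes> b j)"
    proof (intro finsum_cong')
      fix j i assume "j \<in> {..<m}" "i \<in> {..<m}"
      then show "C i j \<otimes> b j \<otimes> h i l = C i j \<otimes> h i l \<otimes> b j"
        using CC bC' hC l by (simp add: m_ac)
    qed (use CC bC' hC l in auto)
    also have "\<dots> = (\<Oplus>j\<in>{..<m}. e j \<otimes> b j)"
      unfolding e_def using CC bC' hC l by (intro finsum_cong' finsum_ldistr[symmetric]) auto
    finally have "(\<Oplus>j\<in>{..<m}. e j \<otimes> b j) = \<zero>" by simp
    then have "e j = \<zero>" using bind eH j by blast
    then show ?thesis unfolding e_def .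
  qed
  have Cz: "C i j = \<zero>" if i: "i < m" and j: "j < m" for i j
  proof -
    have "(\<lambda>i. C i j) \<in> {..<m} \<rightarrow> H" using CH j by simp
    moreover have "\<forall>l<m. (\<Oplus>i\<in>{..<m}. C i j \<otimes> h i l) = \<zero>" using coef0 j by blast
    ultimately have "\<forall>i<m. C i j = \<zero>" using hind[OF H hM good, of m "\<lambda>i. C i j"] by blast
    then show ?thesis using i by blast
  qed
  show ?thesis
  proof (intro allI impI)
    fix i assume i: "i < m"
    have "s i = (\<Oplus>j\<in>{..<m}. C i j \<otimes> b j)" using C i by blast
    also have "\<dots> = (\<Oplus>j\<in>{..<m}. \<zero>)"
      using Cz i bC' by (intro finsum_cong') auto
    also have "\<dots> = \<zero>" by (rule finsum_zero)
    finally show "s i = \<zero>" .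
  qed
qed

lemma minus_zero_eq:
  assumes "a \<in> carrier R" "b \<in> carrier R" "a \<ominus> b = \<zero>"
  shows "a = b"
proof -
  have "a = (a \<ominus> b) \<oplus> b" using assms(1,2) by algebra
  then show ?thesis using assms by simp
qed

lemma lin_comb_inj:
  assumes H: "subfield H R"
    and hM: "h \<in> {..<m} \<rightarrow>\<^sub>E ({..<m} \<rightarrow>\<^sub>E H)"
    and good: "\<forall>k<m. h k \<notin> spanV R H m h k"
    and d: "dimension m H (carrier R)"
  shows "inj_on (\<lambda>t. lin_comb R m t h) ({..<m} \<rightarrow>\<^sub>E carrier R)"
proof
  fix t t' assume t: "t \<in> {..<m} \<rightarrow>\<^sub>E carrier R" and t': "t' \<in> {..<m} \<rightarrow>\<^sub>E carrier R"
    and eq: "lin_comb R m t h = lin_comb R m t' h"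
  obtain b where bC: "b \<in> {..<m} \<rightarrow> carrier R"
    and bspan: "\<forall>s\<in>carrier R. \<exists>c\<in>{..<m}\<rightarrow>H. s = (\<Oplus>j\<in>{..<m}. c j \<otimes> b j)"
    and bind: "\<forall>c\<in>{..<m}\<rightarrow>H. (\<Oplus>j\<in>{..<m}. c j \<otimes> b j) = \<zero> \<longrightarrow> (\<forall>j<m. c j = \<zero>)"
    using basis_exists[OF H d] by blast
  have Hc: "H \<subseteq> carrier R" using subfieldE(3)[OF H] .
  have hC: "\<And>i l. i < m \<Longrightarrow> l < m \<Longrightarrow> h i l \<in> carrier R" using hM Hc by auto
  have tC: "\<And>i. i < m \<Longrightarrow> t i \<in> carrier R" "\<And>i. i < m \<Longrightarrow> t' i \<in> carrier R" using t t' by auto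
  define s where "s i = t i \<ominus> t' i" for i
  have sC: "s \<in> {..<m} \<rightarrow> carrier R" using tC unfolding s_def by auto
  have z: "\<forall>l<m. (\<Oplus>i\<in>{..<m}. s i \<otimes> h i l) = \<zero>"
  proof (intro allI impI)
    fix l assume l: "l < m"
    have e: "(\<Oplus>i\<in>{..<m}. t i \<otimes> h i l) = (\<Oplus>i\<in>{..<m}. t' i \<otimes> h i l)"
      using fun_cong[OF eq, of l] l unfolding lin_comb_def by simp
    have "(\<Oplus>i\<in>{..<m}. s i \<otimes> h i l) = (\<Oplus>i\<in>{..<m}. t i \<otimes> h i l \<ominus> t' i \<otimes> h i l)"
    proof (intro finsum_cong')
      fix i assume "i \<in> {..<m}"
      then show "s i \<otimes> h i l = t i \<otimes> h i l \<ominus> t' i \<otimes> h i l"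
        using tC hC l unfolding s_def by (simp add: minus_eq l_distr l_minus)
    qed (use tC hC l in auto)
    also have "\<dots> = (\<Oplus>i\<in>{..<m}. t i \<otimes> h i l) \<ominus> (\<Oplus>i\<in>{..<m}. t' i \<otimes> h i l)"
      using tC hC l by (intro finsum_diff) auto
    also have "\<dots> = \<zero>"
    proof -
      have "(\<Oplus>i\<in>{..<m}. t' i \<otimes> h i l) \<in> carrier R" using tC hC l by (intro finsum_closed) auto
      then show ?thesis unfolding e by (simp add: minus_eq r_neg)
    qed
    finally show "(\<Oplus>i\<in>{..<m}. s i \<otimes> h i l) = \<zero>" .
  qed
  have "\<forall>i<m. s i = \<zero>" using kernel[OF H hM good bC bspan bind sC z] .
  then have ti: "t i = t' i" if "i < m" for i
    using minus_zero_eq[OF tC(1)[OF that] tC(2)[OF that]] that unfolding s_def by blast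
  show "t = t'"
  proof
    fix i show "t i = t' i"
    proof (cases "i < m")
      case True then show ?thesis using ti by blast
    next
      case False then show ?thesis using t t' by (simp add: PiE_def extensional_def)
    qed
  qed
qed

lemma bad_card:
  assumes H: "subfield H R" and fH: "finite H" and k: "k < m"
  shows "card {h \<in> {..<m} \<rightarrow>\<^sub>E ({..<m} \<rightarrow>\<^sub>E H). h k \<in> spanV R H m h k}
         \<le> card H ^ (m * (m - 1) + k)"
proof -
  define V where "V = {..<m} \<rightarrow>\<^sub>E H"
  define G where "G = ({..<m} - {k}) \<rightarrow>\<^sub>E V"
  define C where "C = {..<k} \<rightarrow>\<^sub>E H"
  define \<phi> where "\<phi> = (\<lambda>(g, c). g(k := (\<lambda>j\<in>{..<m}. finsum R (\<lambda>i. c i \<otimes> g i j) {..<k})))"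
  have Hc: "H \<subseteq> carrier R" using subfieldE(3)[OF H] .
  have sub: "{h \<in> {..<m} \<rightarrow>\<^sub>E V. h k \<in> spanV R H m h k} \<subseteq> \<phi> ` (G \<times> C)"
  proof
    fix h assume h: "h \<in> {h \<in> {..<m} \<rightarrow>\<^sub>E V. h k \<in> spanV R H m h k}"
    then have "h k \<in> spanV R H m h k" by simp
    then obtain c where c: "c \<in> C" and hk: "h k = (\<lambda>j\<in>{..<m}. finsum R (\<lambda>i. c i \<otimes> h i j) {..<k})"
      unfolding spanV_def C_def by (rule imageE)
    define g where "g = h(k := undefined)"
    have hV: "h \<in> {..<m} \<rightarrow>\<^sub>E V" using h by simp
    have gG: "g \<in> G"
    proof -
      have ins: "insert k ({..<m} - {k}) = {..<m}" using k by blast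
      have "h \<in> Pi\<^sub>E (insert k ({..<m} - {k})) (\<lambda>_. V)" unfolding ins by (rule hV)
      then show ?thesis unfolding G_def g_def by (intro fun_upd_in_PiE) simp_all
    qed
    have "(\<lambda>j\<in>{..<m}. finsum R (\<lambda>i. c i \<otimes> g i j) {..<k}) = h k"
      unfolding hk
    proof (rule restrict_ext)
      fix j assume j: "j \<in> {..<m}"
      have cC: "c i \<in> carrier R" if "i < k" for i
      proof -
        have "c i \<in> H" using PiE_mem[OF c[unfolded C_def], of i] that by simp
        then show ?thesis using Hc by blast
      qed
      have hC: "h i j \<in> carrier R" if i: "i < k" for i
      proof -
        have "h i \<in> V" using PiE_mem[OF hV, of i] i k by simp
        then have "h i j \<in> H" using j unfolding V_def by (rule PiE_mem)
        then show ?thesis using Hc by blast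
      qed
      show "finsum R (\<lambda>i. c i \<otimes> g i j) {..<k} = finsum R (\<lambda>i. c i \<otimes> h i j) {..<k}"
      proof (rule finsum_cong')
        show "(\<lambda>i. c i \<otimes> h i j) \<in> {..<k} \<rightarrow> carrier R" using cC hC by simp
        fix i assume "i \<in> {..<k}"
        then have "g i = h i" unfolding g_def by simp
        then show "c i \<otimes> g i j = c i \<otimes> h i j" by simp
      qed simp
    qed
    then have "\<phi> (g, c) = h" unfolding \<phi>_def g_def by auto
    then show "h \<in> \<phi> ` (G \<times> C)" using gG c by force
  qed
  have fV: "finite V" unfolding V_def using fH by (intro finite_PiE) auto
  have fG: "finite G" unfolding G_def using fV by (intro finite_PiE) auto
  have fC: "finite C" unfolding C_def using fH by (intro finite_PiE) auto
  have cV: "card V = card H ^ m" unfolding V_def by (simp add: card_PiE)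
  have cG: "card G = card H ^ (m * (m - 1))"
  proof -
    have "card G = card V ^ card ({..<m} - {k})" unfolding G_def by (simp add: card_PiE)
    also have "card ({..<m} - {k}) = m - 1" using k by (simp add: card_Diff_singleton)
    finally show ?thesis using cV by (simp add: power_mult)
  qed
  have cC: "card C = card H ^ k" unfolding C_def by (simp add: card_PiE)
  have "card {h \<in> {..<m} \<rightarrow>\<^sub>E V. h k \<in> spanV R H m h k} \<le> card (\<phi> ` (G \<times> C))"
    using sub fG fC by (intro card_mono) auto
  also have "\<dots> \<le> card (G \<times> C)" by (rule card_image_le) (use fG fC in auto)
  also have "\<dots> = card H ^ (m * (m - 1) + k)" using cG cC by (simp add: card_cartesian_product power_add)
  finally show ?thesis unfolding V_def .
qed

end

lemma card_preimage_bij: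
  assumes "finite T" "f ` T \<subseteq> T" "inj_on f T" "A \<subseteq> T"
  shows "card {t\<in>T. f t \<in> A} = card A"
proof -
  have "card (f ` T) = card T" using card_image[OF assms(3)] .
  then have fT: "f ` T = T" using card_subset_eq[OF assms(1,2)] by blast
  have sub: "{t\<in>T. f t \<in> A} \<subseteq> T" by blast
  have inj: "inj_on f {t\<in>T. f t \<in> A}" using inj_on_subset[OF assms(3) sub] .
  have "f ` {t\<in>T. f t \<in> A} = A"
  proof
    show "f ` {t\<in>T. f t \<in> A} \<subseteq> A" by blast
    show "A \<subseteq> f ` {t\<in>T. f t \<in> A}"
    proof
      fix a assume a: "a \<in> A"
      then have "a \<in> f ` T" using fT assms(4) by blast
      then obtain t where "t \<in> T" "a = f t" by blast
      then show "a \<in> f ` {t\<in>T. f t \<in> A}" using a by blast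
    qed
  qed
  then show ?thesis using card_image[OF inj] by simp
qed



lemma geo_bound:
  fixes q :: real assumes q: "q \<ge> 2"
  shows "(\<Sum>k<m. q^k) \<le> 2 * q^m / q"
proof (induction m)
  case 0 show ?case using q by simp
next
  case (Suc m)
  have qm: "q^m \<ge> 0" using q by simp
  have a: "2 * q^m / q = (2/q) * q^m" by simp
  have b: "2/q \<le> 1" using q by simp
  have c: "(2/q) * q^m \<le> 1 * q^m" using mult_right_mono[OF b qm] .
  have d: "2 * q^Suc m / q = 2 * q^m" using q by simp
  have "(\<Sum>k<Suc m. q^k) = (\<Sum>k<m. q^k) + q^m" by simp
  also have "\<dots> \<le> 2*q^m/q + q^m" using Suc by simp
  also have "\<dots> \<le> 2 * q^Suc m / q" using a c d by simp
  finally show ?case .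
qed

context field begin

lemma bad_total:
  assumes H: "subfield H R" and fH: "finite H" and q: "card H \<ge> 2"
  shows "real (card {h \<in> {..<m} \<rightarrow>\<^sub>E ({..<m} \<rightarrow>\<^sub>E H). \<exists>k<m. h k \<in> spanV R H m h k})
     \<le> 2 * real (card H) ^ (m * m) / real (card H)"
proof (cases "m = 0")
  case True then show ?thesis by simp
next
  case False
  let ?M = "{..<m} \<rightarrow>\<^sub>E ({..<m} \<rightarrow>\<^sub>E H)"
  have eq: "{h \<in> ?M. \<exists>k<m. h k \<in> spanV R H m h k} = (\<Union>k\<in>{..<m}. {h \<in> ?M. h k \<in> spanV R H m h k})"
    by blast
  have "card {h \<in> ?M. \<exists>k<m. h k \<in> spanV R H m h k} \<le> (\<Sum>k<m. card {h \<in> ?M. h k \<in> spanV R H m h k})"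
    unfolding eq by (rule card_UN_le) simp
  also have "\<dots> \<le> (\<Sum>k<m. card H ^ (m * (m - 1) + k))"
    using bad_card[OF H fH] by (intro sum_mono) simp
  finally have "real (card {h \<in> ?M. \<exists>k<m. h k \<in> spanV R H m h k}) \<le> real (\<Sum>k<m. card H ^ (m * (m - 1) + k))"
    by linarith
  also have "\<dots> = real (card H) ^ (m * (m - 1)) * (\<Sum>k<m. real (card H) ^ k)"
    by (simp add: power_add sum_distrib_left)
  also have "\<dots> \<le> real (card H) ^ (m * (m - 1)) * (2 * real (card H) ^ m / real (card H))"
    using geo_bound[of "real (card H)" m] q by (intro mult_left_mono) simp_all
  also have "\<dots> = 2 * real (card H) ^ (m * (m - 1) + m) / real (card H)"
    by (simp add: power_add)
  also have "m * (m - 1) + m = m * m" using False by (cases m) simp_all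
  finally show ?thesis .
qed

end

theorem mainTheorem3:
  fixes R :: "('a, 'b) ring_scheme" (structure)
    and H :: "'a set" and m :: nat and A :: "(nat \<Rightarrow> 'a) set"
  assumes "field R"
    and "finite (carrier R)"
    and "subfield H R"
    and "ring.dimension R m H (carrier R)"
    and "A \<subseteq> {..<m} \<rightarrow>\<^sub>E carrier R"
  shows "real (card {(h, t). h \<in> {..<m} \<rightarrow>\<^sub>E ({..<m} \<rightarrow>\<^sub>E H)
                          \<and> t \<in> {..<m} \<rightarrow>\<^sub>E carrier R
                          \<and> lin_comb R m t h \<in> A})
           / (real (card H) ^ (m * m) * real (card (carrier R)) ^ m)
         \<le> real (card A) / real (card (carrier R)) ^ m + 2 / real (card H)"
proof -
  interpret field R by fact
  note H = assms(3) and d = assms(4) and AT = assms(5)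
  define T where "T = {..<m} \<rightarrow>\<^sub>E carrier R"
  define M where "M = {..<m} \<rightarrow>\<^sub>E ({..<m} \<rightarrow>\<^sub>E H)"
  define badP where "badP h = (\<exists>k<m. h k \<in> spanV R H m h k)" for h
  define Bad where "Bad = {h \<in> M. badP h}"
  have Hc: "H \<subseteq> carrier R" using subfieldE(3)[OF H] .
  have fH: "finite H" using finite_subset[OF Hc assms(2)] .
  have q2: "card H \<ge> 2"
  proof -
    have "\<zero> \<in> H" "\<one> \<in> H" using subringE(2,3)[OF subfieldE(1)[OF H]] by auto
    moreover have "\<zero> \<noteq> \<one>" using one_not_zero by simp
    ultimately have "{\<zero>, \<one>} \<subseteq> H" "card {\<zero>, \<one>} = 2" by auto
    then show ?thesis using card_mono[OF fH] by metis
  qed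
  have N1: "card (carrier R) \<ge> 1"
    using assms(2) zero_closed by (metis One_nat_def Suc_leI card_gt_0_iff empty_iff)
  have fT: "finite T" unfolding T_def using assms(2) by (intro finite_PiE) auto
  have fM: "finite M" unfolding M_def using fH by (intro finite_PiE finite_PiE) auto
  have cT: "card T = card (carrier R) ^ m" unfolding T_def by (simp add: card_PiE)
  have cM: "card M = card H ^ (m * m)" unfolding M_def by (simp add: card_PiE power_mult)
  have seteq: "{(h, t). h \<in> {..<m} \<rightarrow>\<^sub>E ({..<m} \<rightarrow>\<^sub>E H) \<and> t \<in> {..<m} \<rightarrow>\<^sub>E carrier R
                          \<and> lin_comb R m t h \<in> A} = Sigma M (\<lambda>h. {t \<in> T. lin_comb R m t h \<in> A})"
    unfolding M_def T_def by blast
  have each: "card {t \<in> T. lin_comb R m t h \<in> A} \<le> card A + (if badP h then card T else 0)"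
    if h: "h \<in> M" for h
  proof (cases "badP h")
    case True
    have "card {t \<in> T. lin_comb R m t h \<in> A} \<le> card T" by (rule card_mono[OF fT]) blast
    then show ?thesis using True by simp
  next
    case False
    then have good: "\<forall>k<m. h k \<notin> spanV R H m h k" unfolding badP_def by blast
    have hM: "h \<in> {..<m} \<rightarrow>\<^sub>E ({..<m} \<rightarrow>\<^sub>E H)" using h unfolding M_def .
    have img: "(\<lambda>t. lin_comb R m t h) ` T \<subseteq> T"
    proof
      fix x assume "x \<in> (\<lambda>t. lin_comb R m t h) ` T"
      then obtain t where t: "t \<in> T" and x: "x = lin_comb R m t h" by blast
      have tC: "t i \<in> carrier R" if "i < m" for i using PiE_mem[OF t[unfolded T_def], of i] that by simp
      have hC: "h i j \<in> carrier R" if "i < m" "j < m" for i j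
      proof -
        have i': "i \<in> {..<m}" and j': "j \<in> {..<m}" using that by simp_all
        have "h i \<in> {..<m} \<rightarrow>\<^sub>E H" using PiE_mem[OF hM i'] .
        then have "h i j \<in> H" using PiE_mem[OF _ j'] by blast
        then show ?thesis using Hc by blast
      qed
      have "\<forall>j\<in>{..<m}. (\<Oplus>i\<in>{..<m}. t i \<otimes> h i j) \<in> carrier R"
        using tC hC by (intro ballI finsum_closed) auto
      then show "x \<in> T" unfolding x lin_comb_def T_def restrict_PiE_iff .
    qed
    have inj: "inj_on (\<lambda>t. lin_comb R m t h) T"
      unfolding T_def using lin_comb_inj[OF H hM good d] .
    have "card {t \<in> T. lin_comb R m t h \<in> A} = card A"
    proof -
      have AT': "A \<subseteq> T" unfolding T_def by (rule AT)
      show ?thesis by (rule card_preimage_bij[OF fT img inj AT'])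
    qed
    then show ?thesis by simp
  qed
  have "card {(h, t). h \<in> {..<m} \<rightarrow>\<^sub>E ({..<m} \<rightarrow>\<^sub>E H) \<and> t \<in> {..<m} \<rightarrow>\<^sub>E carrier R
                          \<and> lin_comb R m t h \<in> A} = (\<Sum>h\<in>M. card {t \<in> T. lin_comb R m t h \<in> A})"
    unfolding seteq using fM fT by (intro card_SigmaI) auto
  also have "\<dots> \<le> (\<Sum>h\<in>M. card A + (if badP h then card T else 0))"
    using each by (intro sum_mono) blast
  also have "\<dots> = card M * card A + card Bad * card T"
  proof -
    have "(\<Sum>h\<in>M. if badP h then card T else 0) = (\<Sum>h\<in>Bad. card T)"
      unfolding Bad_def using fM by (rule sum.inter_filter[symmetric])
    then have "(\<Sum>h\<in>M. if badP h then card T else 0) = card Bad * card T" by simp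
    then show ?thesis by (simp add: sum.distrib)
  qed
  finally have cnt0: "card {(h, t). h \<in> {..<m} \<rightarrow>\<^sub>E ({..<m} \<rightarrow>\<^sub>E H) \<and> t \<in> {..<m} \<rightarrow>\<^sub>E carrier R
                          \<and> lin_comb R m t h \<in> A} \<le> card M * card A + card Bad * card T" .
  have cnt: "real (card {(h, t). h \<in> {..<m} \<rightarrow>\<^sub>E ({..<m} \<rightarrow>\<^sub>E H) \<and> t \<in> {..<m} \<rightarrow>\<^sub>E carrier R
                          \<and> lin_comb R m t h \<in> A})
      \<le> real (card H) ^ (m * m) * real (card A) + real (card Bad) * real (card (carrier R)) ^ m"
  proof -
    have "real (card {(h, t). h \<in> {..<m} \<rightarrow>\<^sub>E ({..<m} \<rightarrow>\<^sub>E H) \<and> t \<in> {..<m} \<rightarrow>\<^sub>E carrier R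
                          \<and> lin_comb R m t h \<in> A}) \<le> real (card M * card A + card Bad * card T)"
      using cnt0 by (rule of_nat_mono)
    then show ?thesis unfolding cM cT by (simp only: of_nat_add of_nat_mult of_nat_power)
  qed
  have B: "real (card Bad) \<le> 2 * real (card H) ^ (m * m) / real (card H)"
    using bad_total[OF H fH q2, of m] unfolding Bad_def M_def badP_def .
  define Q where "Q = real (card H) ^ (m * m)"
  define NT where "NT = real (card (carrier R)) ^ m"
  have qp: "real (card H) > 0" using q2 by simp
  have Qp: "Q > 0" unfolding Q_def using qp by (rule zero_less_power)
  have N0: "real (card (carrier R)) > 0" using N1 by simp
  have NTp: "NT > 0" unfolding NT_def using N0 by (rule zero_less_power)
  have BQ: "real (card Bad) / Q \<le> 2 / real (card H)"
  proof -
    have "real (card Bad) / Q \<le> (2 * Q / real (card H)) / Q"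
      using B Qp unfolding Q_def by (intro divide_right_mono) simp_all
    also have "(2 * Q / real (card H)) / Q = 2 / real (card H)" using Qp by simp
    finally show ?thesis .
  qed
  have "real (card {(h, t). h \<in> {..<m} \<rightarrow>\<^sub>E ({..<m} \<rightarrow>\<^sub>E H) \<and> t \<in> {..<m} \<rightarrow>\<^sub>E carrier R
                          \<and> lin_comb R m t h \<in> A}) / (Q * NT)
        \<le> (Q * real (card A) + real (card Bad) * NT) / (Q * NT)"
    using cnt Qp NTp unfolding Q_def NT_def by (intro divide_right_mono) simp_all
  also have "\<dots> = real (card A) / NT + real (card Bad) / Q"
    using Qp NTp by (simp add: field_simps)
  also have "\<dots> \<le> real (card A) / NT + 2 / real (card H)" using BQ by simp
  finally show ?thesis unfolding Q_def NT_def .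
qed

end
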